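(* Let $\mathbb{F}$ be a field and let $(\mathscr{P},\mathscr{B},\mathrm{I})$ be the affine plane over $\mathbb{F}$: $\mathscr{P}=\mathbb{F}\times\mathbb{F}$; the lines are the vertical lines $L_b$ ($b\in\mathbb{F}$) and the non-vertical lines $L_{m,b}$ ($m,b\in\mathbb{F}$); and the incidence is given by $(b,y)\ \mathrm{I}\ L_b$ for all $y\in\mathbb{F}$ and $(x,mx+b)\ \mathrm{I}\ L_{m,b}$ for all $x\in\mathbb{F}$. Let $\Gamma$ be its incidence graph, take the gain group to be $(\mathbb{F},+)$ acting on $\Lambda=\mathbb{F}$ by addition, and define the gain function $\varphi$ on edges by $$\varphi(e)=\begin{cases}-by, & \text{if } e=\{L_b,(b,y)\},\\ xb, & \text{if } e=\{L_{m,b},(x,mx+b)\}.\end{cases}$$ Then $\mathfrak{M}(\Gamma,\varphi)$ is a generalized quadrangle.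
   Context: An incidence structure is a triple $(\mathscr{P},\mathscr{B},\mathrm{I})$ where $\mathscr{P}$ (points) and $\mathscr{B}$ (lines) are nonempty disjoint sets and $\mathrm{I}\subseteq\mathscr{P}\times\mathscr{B}$ is a nonempty incidence relation; write $p\ \mathrm{I}\ b$ or $b\ \mathrm{I}\ p$ when $(p,b)\in\mathrm{I}$. Its incidence graph $\Gamma$ is the bipartite graph with vertex set $\mathscr{P}\cup\mathscr{B}$ and an edge $bp$ for each incident pair $b\ \mathrm{I}\ p$; every edge is oriented from its line to its point. A gain function with gain group $G$ assigns to each edge $e$ an element $\varphi(e)\in G$ (extended to a homomorphism on the free group on the edges, so $\varphi(e^{-1})=\varphi(e)^{-1}$). The gain group acts on a nonempty set $\Lambda$ on the left. Construction $\mathfrak{M}(\Gamma,\varphi)$: the incidence structure $(\mathscr{P}',\mathscr{B}',\mathrm{I}')$ whose points are the formal symbols $x_p$ ($p\in\mathscr{P}$) and $y_{b,\lambda}$ ($b\in\mathscr{B},\lambda\in\Lambda$), whose lines are the formal symbols $z_{p,\lambda}$ ($p\in\mathscr{P},\lambda\in\Lambda$), and whose incidences are exactly: $x_p\ \mathrm{I}'\ z_{p,\lambda}$ for all $\lambda$, and $y_{b,\lambda}\ \mathrm{I}'\ z_{p,\mu}$ whenever $b\ \mathrm{I}\ p$ and $\mu=\varphi(bp)\cdot\lambda$. A $k$-chain is a sequence $(u_0,\dots,u_k)$ of elements of $\mathscr{P}\cup\mathscr{B}$ with $u_i$ incident with $u_{i-1}$ for $1\le i\le k$; the distance $d(u,v)$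 is the least $k$ such that a $k$-chain from $u$ to $v$ exists ($\infty$ if none). A generalized quadrangle is an incidence structure such that (1) $d(u,v)\le 4$ for all elements $u,v$, and (2) whenever $d(u,v)=k<4$ there is a unique $k$-chain from $u$ to $v$. *)

theory Defs
  imports "HOL-Library.Extended_Nat"
begin

definition is_incidence_structure :: "'p set \<Rightarrow> 'l set \<Rightarrow> ('p \<Rightarrow> 'l \<Rightarrow> bool) \<Rightarrow> bool" where
  "is_incidence_structure P B I \<longleftrightarrow> P \<noteq> {} \<and> B \<noteq> {} \<and>
     (\<exists>p b. I p b) \<and> (\<forall>p b. I p b \<longrightarrow> p \<in> P \<and> b \<in> B)"

definition elems :: "'p set \<Rightarrow> 'l set \<Rightarrow> ('p + 'l) set" where
  "elems P B = Inl ` P \<union> Inr ` B"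

fun incid :: "('p \<Rightarrow> 'l \<Rightarrow> bool) \<Rightarrow> ('p + 'l) \<Rightarrow> ('p + 'l) \<Rightarrow> bool" where
  "incid I (Inl p) (Inr b) = I p b"
| "incid I (Inr b) (Inl p) = I p b"
| "incid I _ _ = False"

definition is_chain :: "'p set \<Rightarrow> 'l set \<Rightarrow> ('p \<Rightarrow> 'l \<Rightarrow> bool) \<Rightarrow> nat \<Rightarrow>
    ('p + 'l) \<Rightarrow> ('p + 'l) \<Rightarrow> ('p + 'l) list \<Rightarrow> bool" where
  "is_chain P B I k u v us \<longleftrightarrow> length us = Suc k \<and> us ! 0 = u \<and> us ! k = v \<and>
     set us \<subseteq> elems P B \<and> (\<forall>i. 1 \<le> i \<and> i \<le> k \<longrightarrow> incid I (us ! i) (us ! (i - 1)))"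

definition dist :: "'p set \<Rightarrow> 'l set \<Rightarrow> ('p \<Rightarrow> 'l \<Rightarrow> bool) \<Rightarrow>
    ('p + 'l) \<Rightarrow> ('p + 'l) \<Rightarrow> enat" where
  "dist P B I u v = (if \<exists>k us. is_chain P B I k u v us
      then enat (LEAST k. \<exists>us. is_chain P B I k u v us) else \<infinity>)"

definition generalized_quadrangle :: "'p set \<Rightarrow> 'l set \<Rightarrow> ('p \<Rightarrow> 'l \<Rightarrow> bool) \<Rightarrow> bool" where
  "generalized_quadrangle P B I \<longleftrightarrow> is_incidence_structure P B I \<and>
     (\<forall>u \<in> elems P B. \<forall>v \<in> elems P B. dist P B I u v \<le> 4) \<and>
     (\<forall>u \<in> elems P B. \<forall>v \<in> elems P B. \<forall>k. dist P B I u v = enat k \<and> k < 4 \<longrightarrow>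
        (\<exists>!us. is_chain P B I k u v us))"

datatype ('p, 'l, 'a) mpoint = MX 'p | MY 'l 'a
datatype ('p, 'a) mline = MZ 'p 'a

text \<open>Gain function phi b p = gain of the edge bp (oriented from line b to point p);
act g lam is the left action of the gain group on Lambda.\<close>

definition M_points :: "'p set \<Rightarrow> 'l set \<Rightarrow> 'a set \<Rightarrow> ('p, 'l, 'a) mpoint set" where
  "M_points P B Lam = MX ` P \<union> {MY b lam | b lam. b \<in> B \<and> lam \<in> Lam}"

definition M_lines :: "'p set \<Rightarrow> 'a set \<Rightarrow> ('p, 'a) mline set" where
  "M_lines P Lam = {MZ p lam | p lam. p \<in> P \<and> lam \<in> Lam}"

fun M_inc :: "'p set \<Rightarrow> 'l set \<Rightarrow> ('p \<Rightarrow> 'l \<Rightarrow> bool) \<Rightarrow> 'a set \<Rightarrow>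
    ('l \<Rightarrow> 'p \<Rightarrow> 'g) \<Rightarrow> ('g \<Rightarrow> 'a \<Rightarrow> 'a) \<Rightarrow> ('p, 'l, 'a) mpoint \<Rightarrow> ('p, 'a) mline \<Rightarrow> bool" where
  "M_inc P B I Lam phi act (MX p) (MZ p' mu) \<longleftrightarrow> p \<in> P \<and> mu \<in> Lam \<and> p' = p"
| "M_inc P B I Lam phi act (MY b lam) (MZ p mu) \<longleftrightarrow>
     b \<in> B \<and> lam \<in> Lam \<and> p \<in> P \<and> mu \<in> Lam \<and> I p b \<and> mu = act (phi b p) lam"

datatype 'a aline = Vert 'a | NonVert 'a 'a

fun aff_inc :: "('a::field \<times> 'a) \<Rightarrow> 'a aline \<Rightarrow> bool" where
  "aff_inc (x, y) (Vert b) \<longleftrightarrow> x = b"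
| "aff_inc (x, y) (NonVert m b) \<longleftrightarrow> y = m * x + b"

text \<open>The gain function of the theorem (only its values on edges matter).\<close>
fun aff_gain :: "'a::field aline \<Rightarrow> ('a \<times> 'a) \<Rightarrow> 'a" where
  "aff_gain (Vert b) (x, y) = - (b * y)"
| "aff_gain (NonVert m b) (x, y) = x * b"

end

theory Submission
  imports Defs
begin


lemma incid_sym: "incid I x y = incid I y x"
  by (cases x; cases y) auto

lemma all2: "(\<forall>i. 1 \<le> i \<and> i \<le> (2::nat) \<longrightarrow> Q i) \<longleftrightarrow> Q 1 \<and> Q 2"
proof -
  have "1 \<le> i \<and> i \<le> (2::nat) \<longleftrightarrow> i = 1 \<or> i = 2" for i by auto
  then show ?thesis by auto
qed
lemma all3: "(\<forall>i. 1 \<le> i \<and> i \<le> (3::nat) \<longrightarrow> Q i) \<longleftrightarrow> Q 1 \<and> Q 2 \<and> Q 3"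
proof -
  have "1 \<le> i \<and> i \<le> (3::nat) \<longleftrightarrow> i = 1 \<or> i = 2 \<or> i = 3" for i by auto
  then show ?thesis by auto
qed
lemma all4: "(\<forall>i. 1 \<le> i \<and> i \<le> (4::nat) \<longrightarrow> Q i) \<longleftrightarrow> Q 1 \<and> Q 2 \<and> Q 3 \<and> Q 4"
proof -
  have "1 \<le> i \<and> i \<le> (4::nat) \<longleftrightarrow> i = 1 \<or> i = 2 \<or> i = 3 \<or> i = 4" for i by auto
  then show ?thesis by auto
qed

lemma chain0: "is_chain P B I 0 u v us \<longleftrightarrow> us = [u] \<and> v = u \<and> u \<in> elems P B"
  unfolding is_chain_def by (auto simp: length_Suc_conv)

lemma chain1: "is_chain P B I 1 u v us \<longleftrightarrow> us = [u,v] \<and> u \<in> elems P B \<and> v \<in> elems P B \<and> incid I v u"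
  unfolding is_chain_def by (auto simp: length_Suc_conv numeral_eq_Suc le_Suc_eq)

lemma chain2: "is_chain P B I 2 u v us \<longleftrightarrow> (\<exists>w. us = [u,w,v] \<and> u \<in> elems P B \<and> w \<in> elems P B \<and> v \<in> elems P B \<and> incid I w u \<and> incid I v w)"
  unfolding is_chain_def all2 by (auto simp: length_Suc_conv numeral_eq_Suc)

lemma chain3: "is_chain P B I 3 u v us \<longleftrightarrow> (\<exists>w1 w2. us = [u,w1,w2,v] \<and> u \<in> elems P B \<and> w1 \<in> elems P B \<and> w2 \<in> elems P B \<and> v \<in> elems P B \<and> incid I w1 u \<and> incid I w2 w1 \<and> incid I v w2)"
  unfolding is_chain_def all3 by (auto simp: length_Suc_conv numeral_eq_Suc)

lemma chain4: "is_chain P B I 4 u v us \<longleftrightarrow> (\<exists>w1 w2 w3. us = [u,w1,w2,w3,v] \<and> u \<in> elems P B \<and> w1 \<in> elems P B \<and> w2 \<in> elems P B \<and> w3 \<in> elems P B \<and> v \<in> elems P B \<and> incid I w1 u \<and> incid I w2 w1 \<and> incid I w3 w2 \<and> incid I v w3)"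
  unfolding is_chain_def all4 by (auto simp: length_Suc_conv numeral_eq_Suc)

lemma chain1': "is_chain P B I (Suc 0) u v us \<longleftrightarrow> us = [u,v] \<and> u \<in> elems P B \<and> v \<in> elems P B \<and> incid I v u"
  using chain1 by simp

lemma dist_le: "is_chain P B I k u v us \<Longrightarrow> dist P B I u v \<le> enat k"
  unfolding dist_def by (auto intro: Least_le)

lemma dist_eq: assumes "dist P B I u v = enat k"
  shows "\<exists>us. is_chain P B I k u v us" "j < k \<Longrightarrow> \<not> is_chain P B I j u v us"
proof -
  have ex: "\<exists>k us. is_chain P B I k u v us" using assms unfolding dist_def by (auto split: if_splits)
  then have k: "k = (LEAST k. \<exists>us. is_chain P B I k u v us)" using assms unfolding dist_def by auto
  show "\<exists>us. is_chain P B I k u v us" unfolding k using LeastI_ex[of "\<lambda>k. \<exists>us. is_chain P B I k u v us"] ex by blast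
  show "j < k \<Longrightarrow> \<not> is_chain P B I j u v us" unfolding k using not_less_Least by blast
qed


lemma incid_isl: "incid I x y \<Longrightarrow> isl x \<noteq> isl y"
  by (cases x; cases y) auto

lemma gq_generic:
  assumes inc: "\<And>p b. I p b \<Longrightarrow> p \<in> P \<and> b \<in> B"
  and ne: "\<exists>p b. I p b"
  and pt: "\<And>p. p \<in> P \<Longrightarrow> \<exists>b. I p b"
  and ln: "\<And>b. b \<in> B \<Longrightarrow> \<exists>p. I p b"
  and A: "\<And>p p' b b'. I p b \<Longrightarrow> I p' b \<Longrightarrow> I p b' \<Longrightarrow> I p' b' \<Longrightarrow> p = p' \<or> b = b'"
  and Bex: "\<And>p b. p \<in> P \<Longrightarrow> b \<in> B \<Longrightarrow> \<not> I p b \<Longrightarrow> \<exists>c q. I p c \<and> I q c \<and> I q b"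
  and Bun: "\<And>p b c q c' q'. \<not> I p b \<Longrightarrow> I p c \<Longrightarrow> I q c \<Longrightarrow> I q b \<Longrightarrow> I p c' \<Longrightarrow> I q' c' \<Longrightarrow> I q' b \<Longrightarrow> c = c'"
  shows "generalized_quadrangle P B I"
proof -
  let ?E = "elems P B"
  have incE: "incid I x y \<Longrightarrow> x \<in> ?E \<and> y \<in> ?E" for x y
    using inc by (cases x; cases y) (auto simp: elems_def)
  have g1: "x \<in> ?E \<Longrightarrow> \<exists>y. incid I x y" for x
    using pt ln by (cases x) (auto simp: elems_def, metis incid.simps(1), metis incid.simps(2))
  have g2: "w = w'" if h: "incid I x w" "incid I w y" "incid I x w'" "incid I w' y" "x \<noteq> y" for x y w w'
  proof (cases x)
    case (Inl p)
    then obtain b q b' where eqs: "w = Inr b" "y = Inl q" "w' = Inr b'"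
      using h by (cases w; cases y; cases w') auto
    show ?thesis using A[of p b q b'] h Inl eqs by auto
  next
    case (Inr c)
    then obtain p c' p' where eqs: "w = Inl p" "y = Inr c'" "w' = Inl p'"
      using h by (cases w; cases y; cases w') auto
    show ?thesis using A[of p c p' c'] h Inr eqs by auto
  qed
  have g3ex: "\<exists>w1 w2. incid I x w1 \<and> incid I w1 w2 \<and> incid I w2 y"
    if h: "x \<in> ?E" "y \<in> ?E" "isl x \<noteq> isl y" "\<not> incid I x y" for x y
  proof (cases x)
    case (Inl p)
    then obtain b where b: "y = Inr b" using h by (cases y) auto
    have "\<exists>c q. I p c \<and> I q c \<and> I q b" using Bex[of p b] h Inl b by (auto simp: elems_def)
    then show ?thesis using Inl b by (metis incid.simps(1,2))
  next
    case (Inr b)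
    then obtain p where p: "y = Inl p" using h by (cases y) auto
    have "\<exists>c q. I p c \<and> I q c \<and> I q b" using Bex[of p b] h Inr p by (auto simp: elems_def)
    then show ?thesis using Inr p by (metis incid.simps(1,2))
  qed
  have g3un: "w1 = w1' \<and> w2 = w2'"
    if h: "incid I x w1" "incid I w1 w2" "incid I w2 y" "incid I x w1'" "incid I w1' w2'" "incid I w2' y"
       "\<not> incid I x y" for x y w1 w2 w1' w2'
  proof (cases x)
    case (Inl p)
    then obtain c q c' q' b where eqs: "w1 = Inr c" "w2 = Inl q" "y = Inr b" "w1' = Inr c'" "w2' = Inl q'"
      using h by (cases w1; cases w2; cases y; cases w1'; cases w2') auto
    have "c = c'" using Bun[of p b c q c' q'] h Inl eqs by auto
    moreover have "q = q'" using A[of q c q' b] h Inl eqs \<open>c = c'\<close> by auto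
    ultimately show ?thesis using eqs by auto
  next
    case (Inr b)
    then obtain c q c' q' p where eqs: "w1 = Inl q" "w2 = Inr c" "y = Inl p" "w1' = Inl q'" "w2' = Inr c'"
      using h by (cases w1; cases w2; cases y; cases w1'; cases w2') auto
    have "c = c'" using Bun[of p b c q c' q'] h Inr eqs by auto
    moreover have "q = q'" using A[of q c q' b] h Inr eqs \<open>c = c'\<close> by auto
    ultimately show ?thesis using eqs by auto
  qed
  have D: "dist P B I u v \<le> 4" if hD: "u \<in> ?E" "v \<in> ?E" for u v
  proof -
    have odd: "\<exists>k us. k \<le> 3 \<and> is_chain P B I k x y us" if h: "x \<in> ?E" "y \<in> ?E" "isl x \<noteq> isl y" for x y
    proof (cases "incid I x y")
      case True
      have "is_chain P B I 1 x y [x,y]" using h True incid_sym[of I x y] by (simp only: chain1)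
      then show ?thesis by (intro exI[of _ 1]) auto
    next
      case False
      then obtain w1 w2 where ww: "incid I x w1" "incid I w1 w2" "incid I w2 y" using g3ex h by blast
      have "incid I w1 x" "incid I w2 w1" "incid I y w2" using ww incid_sym by metis+
      moreover have "x \<in> ?E" "w1 \<in> ?E" "w2 \<in> ?E" "y \<in> ?E" using ww incE by blast+
      ultimately have "is_chain P B I 3 x y [x,w1,w2,y]" unfolding chain3 by blast
      then show ?thesis by (intro exI[of _ 3]) auto
    qed
    have "\<exists>k us. k \<le> 4 \<and> is_chain P B I k u v us"
    proof (cases "isl u = isl v")
      case False
      then obtain k us where "k \<le> 3" "is_chain P B I k u v us" using odd[OF hD] by blast
      then show ?thesis by (intro exI[of _ k] exI[of _ us]) auto
    next
      case True
      show ?thesis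
      proof (cases "u = v")
        case True
        then show ?thesis using hD by (intro exI[of _ 0]) (auto simp: chain0)
      next
        case False
        obtain w where w: "incid I v w" using g1 hD by blast
        have "isl u \<noteq> isl w" using True w incid_isl by metis
        show ?thesis
        proof (cases "incid I u w")
          case True
          have "incid I w u" "incid I v w" using True w incid_sym by metis+
          moreover have "u \<in> ?E" "w \<in> ?E" "v \<in> ?E" using True w incE by blast+
          ultimately have "is_chain P B I 2 u v [u,w,v]" unfolding chain2 by blast
          then show ?thesis by (intro exI[of _ 2]) auto
        next
          case False
          then obtain w1 w2 where ww: "incid I u w1" "incid I w1 w2" "incid I w2 w"
            using g3ex \<open>isl u \<noteq> isl w\<close> hD w incE by blast
          have "incid I w1 u" "incid I w2 w1" "incid I w w2" "incid I v w" using ww w incid_sym by metis+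
          moreover have "u \<in> ?E" "w1 \<in> ?E" "w2 \<in> ?E" "w \<in> ?E" "v \<in> ?E" using ww w incE by blast+
          ultimately have "is_chain P B I 4 u v [u,w1,w2,w,v]" unfolding chain4 by blast
          then show ?thesis by (intro exI[of _ 4]) auto
        qed
      qed
    qed
    then obtain k us where "k \<le> 4" "is_chain P B I k u v us" by blast
    then show ?thesis using dist_le by (metis enat_ord_simps(1) numeral_eq_enat order_trans)
  qed
  have U: "\<exists>!us. is_chain P B I k u v us" if hU: "dist P B I u v = enat k" "k < 4" for u v k
  proof -
    obtain us where us: "is_chain P B I k u v us" using dist_eq(1)[OF hU(1)] by blast
    have no: "j < k \<Longrightarrow> \<not> is_chain P B I j u v vs" for j vs using dist_eq(2)[OF hU(1)] by blast
    have "k = 0 \<or> k = 1 \<or> k = 2 \<or> k = 3" using hU by auto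
    moreover have "vs = us" if "is_chain P B I k u v vs" "k = 0" for vs
      using that us by (auto simp: chain0)
    moreover have "vs = us" if "is_chain P B I k u v vs" "k = 1" for vs
      using that us by (auto simp: chain1 chain1')
    moreover have "vs = us" if hv: "is_chain P B I k u v vs" "k = 2" for vs
    proof -
      have "u \<noteq> v" using no[of 0 "[u]"] that(2) us by (auto simp: chain0 chain2)
      obtain w where w: "vs = [u,w,v]" "incid I w u" "incid I v w" using hv chain2[of P B I u v vs] by auto
      obtain w' where w': "us = [u,w',v]" "incid I w' u" "incid I v w'" using us hv(2) chain2[of P B I u v us] by auto
      have "w = w'" using g2[of u w v w'] w w' incid_sym \<open>u \<noteq> v\<close> by metis
      then show ?thesis using w w' by simp
    qed
    moreover have "vs = us" if hv: "is_chain P B I k u v vs" "k = 3" for vs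
    proof -
      have "\<not> incid I u v"
      proof
        assume "incid I u v"
        then have "is_chain P B I 1 u v [u,v]" using incE incid_sym unfolding chain1 by metis
        then show False using no[of 1 "[u,v]"] hv(2) by simp
      qed
      obtain w1 w2 where w: "vs = [u,w1,w2,v]" "incid I w1 u" "incid I w2 w1" "incid I v w2" using hv chain3[of P B I u v vs] by auto
      obtain w1' w2' where w': "us = [u,w1',w2',v]" "incid I w1' u" "incid I w2' w1'" "incid I v w2'" using us hv(2) chain3[of P B I u v us] by auto
      have "w1 = w1' \<and> w2 = w2'" using g3un[of u w1 w2 v w1' w2'] w w' incid_sym \<open>\<not> incid I u v\<close> by metis
      then show ?thesis using w w' by simp
    qed
    ultimately show ?thesis using us by blast
  qed
  have IS: "is_incidence_structure P B I" unfolding is_incidence_structure_def using ne inc by blast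
  show ?thesis unfolding generalized_quadrangle_def using IS D U by blast
qed



definition lt :: "('a::field \<times> 'a) \<Rightarrow> ('a \<times> 'a) \<Rightarrow> 'a aline" where
  "lt p q = (if fst p = fst q then Vert (fst p) else
     NonVert ((snd q - snd p)/(fst q - fst p)) (snd p - (snd q - snd p)/(fst q - fst p) * fst p))"

lemma lt_inc: "aff_inc p (lt p q)" "aff_inc q (lt p q)"
proof -
  obtain a b c d where pq: "p = (a,b)" "q = (c,d)" by fastforce
  show "aff_inc p (lt p q)" using pq by (auto simp: lt_def)
  show "aff_inc q (lt p q)"
  proof (cases "a = c")
    case True then show ?thesis using pq by (auto simp: lt_def)
  next
    case False
    then have "c - a \<noteq> 0" by simp
    have "\<And>k. k * c + (b - k * a) = k * (c - a) + b"
      by (simp add: algebra_simps)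
    then have "(d - b) / (c - a) * c + (b - (d - b) / (c - a) * a) = (d - b) / (c - a) * (c - a) + b" .
    also have "\<dots> = d" using \<open>c - a \<noteq> 0\<close> by simp
    finally have "d = (d - b) / (c - a) * c + (b - (d - b) / (c - a) * a)" by simp
    then show ?thesis using pq False by (auto simp: lt_def)
  qed
qed

lemma line_uniq:
  fixes p q :: "'a::field \<times> 'a"
  assumes "p \<noteq> q" "aff_inc p L" "aff_inc q L" "aff_inc p L'" "aff_inc q L'"
  shows "L = L'"
proof -
  obtain a b c d where pq: "p = (a,b)" "q = (c,d)" by fastforce
  show ?thesis
  proof (cases L)
    case (Vert x)
    then show ?thesis using assms pq by (cases L') auto
  next
    case (NonVert m e)
    show ?thesis
    proof (cases L')
      case (Vert x)
      then show ?thesis using assms pq NonVert by auto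
    next
      case (NonVert m' e')
      have ac: "a \<noteq> c" using assms pq \<open>L = NonVert m e\<close> by auto
      have e1: "b = m * a + e" "d = m * c + e" "b = m' * a + e'" "d = m' * c + e'"
        using assms pq \<open>L = NonVert m e\<close> NonVert by auto
      have "(m - m') * (a - c) = (m*a+e) - (m*c+e) - ((m'*a+e') - (m'*c+e'))" by (simp add: algebra_simps)
      also have "\<dots> = 0" using e1 by simp
      finally have "(m - m') * (a - c) = 0" .
      then have "m = m'" using ac by simp
      then have "e = e'" using e1 by simp
      then show ?thesis using NonVert \<open>L = NonVert m e\<close> \<open>m = m'\<close> by simp
    qed
  qed
qed

lemma gdiff: "aff_inc r M \<Longrightarrow> aff_inc q M \<Longrightarrow>
   aff_gain M r - aff_gain M q = fst r * snd q - fst q * snd r"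
  by (cases r; cases q; cases M) (auto simp: algebra_simps)

definition ff :: "'a::field aline \<Rightarrow> 'a \<times> 'a \<Rightarrow> 'a \<times> 'a \<Rightarrow> 'a" where
  "ff L q r = aff_gain L r - (fst r * snd q - fst q * snd r)"

lemma ff_surj: assumes "\<not> aff_inc q L" shows "\<exists>r. aff_inc r L \<and> ff L q r = t"
proof -
  obtain a b0 where q: "q = (a,b0)" by fastforce
  show ?thesis
  proof (cases L)
    case (Vert b)
    then have "a - b \<noteq> 0" using assms q by auto
    define y where "y = (t + b * b0) / (a - b)"
    have "(a - b) * y = t + b * b0" unfolding y_def using \<open>a - b \<noteq> 0\<close> by simp
    then have "ff L q (b, y) = t" using Vert q by (simp add: ff_def algebra_simps)
    then show ?thesis using Vert by (intro exI[of _ "(b,y)"]) auto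
  next
    case (NonVert m c)
    then have nz: "c - b0 + a * m \<noteq> 0" using assms q by (auto simp: algebra_simps)
    define x where "x = (t - a * c) / (c - b0 + a * m)"
    have "x * (c - b0 + a * m) = t - a * c" unfolding x_def using nz by simp
    then have "ff L q (x, m * x + c) = t" using NonVert q by (simp add: ff_def algebra_simps)
    then show ?thesis using NonVert by (intro exI[of _ "(x, m * x + c)"]) auto
  qed
qed

lemma ff_inj: assumes "\<not> aff_inc q L" "aff_inc r L" "aff_inc r' L" "ff L q r = ff L q r'"
  shows "r = r'"
proof -
  obtain a b0 where q: "q = (a,b0)" by fastforce
  obtain x y x' y' where r: "r = (x,y)" "r' = (x',y')" by fastforce
  show ?thesis
  proof (cases L)
    case (Vert b)
    then have "a - b \<noteq> 0" using assms q by auto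
    have "x = b" "x' = b" using assms r Vert by auto
    then have "(a - b) * (y - y') = 0" using assms(4) r q Vert by (simp add: ff_def algebra_simps)
    then show ?thesis using \<open>a - b \<noteq> 0\<close> r \<open>x = b\<close> \<open>x' = b\<close> by simp
  next
    case (NonVert m c)
    then have nz: "c - b0 + a * m \<noteq> 0" using assms q by (auto simp: algebra_simps)
    have yy: "y = m * x + c" "y' = m * x' + c" using assms r NonVert by auto
    then have "(x - x') * (c - b0 + a * m) = 0" using assms(4) r q NonVert by (simp add: ff_def algebra_simps)
    then have "x = x'" using nz by simp
    then show ?thesis using yy r by simp
  qed
qed



abbreviation Mi :: "('a::field \<times> 'a, 'a aline, 'a) mpoint \<Rightarrow> ('a \<times> 'a, 'a) mline \<Rightarrow> bool" where
  "Mi \<equiv> M_inc UNIV UNIV aff_inc UNIV aff_gain (\<lambda>g lam. g + lam)"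

lemma grp1: "(X::'a::ab_group_add) - Y = Z \<Longrightarrow> A + l = X + k \<Longrightarrow> nu = Y + k \<Longrightarrow> A - Z = nu - l"
  by (metis add_diff_cancel_right' diff_diff_eq2 diff_add_eq add.commute)

lemma grp2: "(A::'a::ab_group_add) - Z = nu - lam \<Longrightarrow> X - Y = Z \<Longrightarrow> A + lam = X + (nu - Y)"
  by (metis add_diff_cancel_right' diff_diff_eq2 diff_add_eq add.commute)

lemma Mi_A: "Mi P c \<Longrightarrow> Mi P' c \<Longrightarrow> Mi P c' \<Longrightarrow> Mi P' c' \<Longrightarrow> P = P' \<or> c = c'"
proof -
  assume h: "Mi P c" "Mi P' c" "Mi P c'" "Mi P' c'"
  obtain r mu r' mu' where c: "c = MZ r mu" "c' = MZ r' mu'" by (cases c; cases c') auto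
  show ?thesis
  proof (cases P)
    case (MX p)
    show ?thesis
    proof (cases P')
      case (MX p')
      then show ?thesis using h c \<open>P = MX p\<close> by auto
    next
      case (MY L l)
      then show ?thesis using h c \<open>P = MX p\<close> by auto
    qed
  next
    case (MY L l)
    show ?thesis
    proof (cases P')
      case (MX p')
      then show ?thesis using h c \<open>P = MY L l\<close> by auto
    next
      case (MY L' l')
      show ?thesis
      proof (cases "r = r'")
        case True
        then show ?thesis using h c \<open>P = MY L l\<close> MY by auto
      next
        case False
        have "L = L'" using line_uniq[OF False, of L L'] h c \<open>P = MY L l\<close> MY by auto
        then show ?thesis using h c \<open>P = MY L l\<close> MY by auto
      qed
    qed
  qed
qed

lemma key_r:
  assumes n: "\<not> Mi (MY L l) (MZ q nu)" and r: "aff_inc r L"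
    and Q: "Mi Q (MZ r (aff_gain L r + l))" "Mi Q (MZ q nu)"
  shows "(aff_inc q L \<longrightarrow> r = q) \<and> (\<not> aff_inc q L \<longrightarrow> ff L q r = nu - l)"
proof (cases Q)
  case (MX s)
  then show ?thesis using Q r by auto
next
  case (MY M k)
  have rM: "aff_inc r M" "aff_inc q M" "aff_gain L r + l = aff_gain M r + k" "nu = aff_gain M q + k"
    using Q MY by auto
  show ?thesis
  proof (intro conjI impI)
    assume qL: "aff_inc q L"
    show "r = q"
    proof (rule ccontr)
      assume "r \<noteq> q"
      then have "M = L" using line_uniq[of r q M L] rM r qL by auto
      then show False using rM n qL by auto
    qed
  next
    assume "\<not> aff_inc q L"
    have "aff_gain M r - aff_gain M q = fst r * snd q - fst q * snd r" using gdiff rM by blast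
    then show "ff L q r = nu - l" using rM grp1 unfolding ff_def by metis
  qed
qed

lemma Mi_Bun:
  assumes n: "\<not> Mi P l" and h: "Mi P c" "Mi Q c" "Mi Q l" "Mi P c'" "Mi Q' c'" "Mi Q' l"
  shows "c = c'"
proof -
  obtain r mu r' mu' q nu where c: "c = MZ r mu" "c' = MZ r' mu'" "l = MZ q nu"
    by (cases c; cases c'; cases l) auto
  show ?thesis
  proof (cases P)
    case (MX p)
    have "r = p" "r' = p" using h c MX by auto
    have pq: "p \<noteq> q" using n MX c by auto
    obtain L k where Q: "Q = MY L k" using h c MX pq \<open>r = p\<close> by (cases Q) auto
    obtain L' k' where Q': "Q' = MY L' k'" using h c MX pq \<open>r' = p\<close> by (cases Q') auto
    have "L = L'" using line_uniq[OF pq, of L L'] h c Q Q' \<open>r = p\<close> \<open>r' = p\<close> by auto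
    then show ?thesis using h c Q Q' \<open>r = p\<close> \<open>r' = p\<close> by auto
  next
    case (MY L lam)
    have rr: "aff_inc r L" "mu = aff_gain L r + lam" "aff_inc r' L" "mu' = aff_gain L r' + lam"
      using h c MY by auto
    have k1: "(aff_inc q L \<longrightarrow> r = q) \<and> (\<not> aff_inc q L \<longrightarrow> ff L q r = nu - lam)"
      using key_r[of L lam q nu r Q] n h c MY rr by auto
    have k2: "(aff_inc q L \<longrightarrow> r' = q) \<and> (\<not> aff_inc q L \<longrightarrow> ff L q r' = nu - lam)"
      using key_r[of L lam q nu r' Q'] n h c MY rr by auto
    have "r = r'"
      using k1 k2 ff_inj[of q L r r'] rr by (cases "aff_inc q L") auto
    then show ?thesis using rr c by simp
  qed
qed

lemma Mi_Bex:
  assumes n: "\<not> Mi P l"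
  shows "\<exists>c Q. Mi P c \<and> Mi Q c \<and> Mi Q l"
proof -
  obtain q nu where l: "l = MZ q nu" by (cases l) auto
  show ?thesis
  proof (cases P)
    case (MX p)
    define L where "L = lt p q"
    define k where "k = nu - aff_gain L q"
    have "Mi P (MZ p (aff_gain L p + k)) \<and> Mi (MY L k) (MZ p (aff_gain L p + k)) \<and> Mi (MY L k) l"
      using MX l lt_inc[where p=p and q=q] L_def k_def by auto
    then show ?thesis by blast
  next
    case (MY L lam)
    show ?thesis
    proof (cases "aff_inc q L")
      case True
      have "Mi P (MZ q (aff_gain L q + lam)) \<and> Mi (MX q) (MZ q (aff_gain L q + lam)) \<and> Mi (MX q) l"
        using MY l True by auto
      then show ?thesis by blast
    next
      case False
      obtain r where r: "aff_inc r L" "ff L q r = nu - lam" using ff_surj[OF False] by blast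
      define M where "M = lt r q"
      define k where "k = nu - aff_gain M q"
      have M: "aff_inc r M" "aff_inc q M" using lt_inc[where p=r and q=q] M_def by auto
      have "aff_gain M r - aff_gain M q = fst r * snd q - fst q * snd r" using gdiff M by blast
      then have eq: "aff_gain L r + lam = aff_gain M r + k" using r grp2 unfolding k_def ff_def
        by metis
      have "Mi P (MZ r (aff_gain L r + lam)) \<and> Mi (MY M k) (MZ r (aff_gain L r + lam)) \<and> Mi (MY M k) l"
        using MY l r M eq k_def by auto
      then show ?thesis by blast
    qed
  qed
qed


lemma M_points_UNIV: "M_points UNIV UNIV UNIV = UNIV"
proof -
  have "x \<in> M_points UNIV UNIV UNIV" for x by (cases x) (auto simp: M_points_def)
  then show ?thesis by blast
qed

lemma M_lines_UNIV: "M_lines UNIV UNIV = UNIV"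
proof -
  have "x \<in> M_lines UNIV UNIV" for x by (cases x) (auto simp: M_lines_def)
  then show ?thesis by blast
qed

lemma aline_has_point: "\<exists>p. aff_inc p (L::'a::field aline)"
proof (cases L)
  case (Vert b) then show ?thesis by (intro exI[of _ "(b, 0)"]) simp
next
  case (NonVert m c) then show ?thesis by (intro exI[of _ "(0, c)"]) simp
qed

theorem theorem7:
  shows "generalized_quadrangle
           (M_points (UNIV :: ('a::field \<times> 'a) set) (UNIV :: 'a aline set) (UNIV :: 'a set))
           (M_lines (UNIV :: ('a \<times> 'a) set) (UNIV :: 'a set))
           (M_inc UNIV UNIV aff_inc UNIV aff_gain (\<lambda>g lam. g + lam))"
  unfolding M_points_UNIV M_lines_UNIV
proof (rule gq_generic)
  show "\<exists>p b. Mi p b" by (intro exI[of _ "MX (0,0)"] exI[of _ "MZ (0,0) 0"]) simp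
  show "\<exists>b. Mi p b" for p :: "('a \<times> 'a, 'a aline, 'a) mpoint"
  proof (cases p)
    case (MX x) then show ?thesis by (intro exI[of _ "MZ x 0"]) simp
  next
    case (MY L l)
    obtain r where "aff_inc r L" using aline_has_point by blast
    then show ?thesis using MY by (intro exI[of _ "MZ r (aff_gain L r + l)"]) simp
  qed
  show "\<exists>p. Mi p b" for b :: "('a \<times> 'a, 'a) mline"
    by (cases b) (auto intro!: exI[of _ "MX _"])
  show "Mi p b \<Longrightarrow> Mi p' b \<Longrightarrow> Mi p b' \<Longrightarrow> Mi p' b' \<Longrightarrow> p = p' \<or> b = b'" for p p' b b'
    by (rule Mi_A)
  show "\<not> Mi p b \<Longrightarrow> \<exists>c q. Mi p c \<and> Mi q c \<and> Mi q b" for p b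
    by (rule Mi_Bex)
  show "\<not> Mi p b \<Longrightarrow> Mi p c \<Longrightarrow> Mi q c \<Longrightarrow> Mi q b \<Longrightarrow> Mi p c' \<Longrightarrow> Mi q' c' \<Longrightarrow> Mi q' b \<Longrightarrow> c = c'"
    for p b c q c' q' by (rule Mi_Bun)
qed simp_all

end
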